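(* Let $R$, $R'$ be Hecke symmetries with the same parameter $q$ on finite dimensional spaces $V$, $V'$. For every $n\ge0$ there is an isomorphism $A_n(R',R)\cong\operatorname{Hom}_{\mathcal H_n}(V^{\otimes n},V'^{\otimes n})^*$, where $V^{\otimes n}$ and $V'^{\otimes n}$ are $\mathcal H_n(q)$-modules via $R$ and $R'$.
   Context: A Hecke symmetry with parameter $0\neq q\in\Bbbk$ on $V$ is a linear operator $R$ on $V\otimes V$ with $(R+\mathrm{id})(R-q\,\mathrm{id})=0$ and the braid relation $(R\otimes\mathrm{id})(\mathrm{id}\otimes R)(R\otimes\mathrm{id})=(\mathrm{id}\otimes R)(R\otimes\mathrm{id})(\mathrm{id}\otimes R)$; the Hecke algebra $\mathcal H_n(q)$ acts on $V^{\otimes n}$ with $T_i$ acting as $\mathrm{id}^{\otimes(i-1)}\otimes R\otimes\mathrm{id}^{\otimes(n-i-1)}$. With $R'^*$ the adjoint of $R'$ on $(V'^* )^{\otimes2}\cong(V'^{\otimes2})^*$, $\mathcal R$ is the operator on $(V'^*\otimes V)^{\otimes2}$ corresponding to $(R'^* )^{-1}\otimes R$ under $(V'^*\otimes V)^{\otimes2}\cong(V'^* )^{\otimes2}\otimes V^{\otimes2}$, and $A(R',R)$ is the quotient of $\mathbb T(V'^*\otimes V)$ by the ideal generated by $\operatorname{Im}(\mathcal R-\mathrm{id})$, with $A_n(R',R)$ its degree $n$ component. *)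

theory Defs
  imports Main
begin

text \<open>A finite dimensional space V of dimension d has basis
  indexed by the set {..<d}. Tensors of degree n over an alphabet X (basis index set)
  are functions on words (lists) of length n over X, vanishing off such words.
  Linear operators on the n-th tensor power are matrices indexed by pairs of words:
  entry M u w is the coefficient of e_u in M(e_w).\<close>

definition words :: "'x set \<Rightarrow> nat \<Rightarrow> 'x list set" where
  "words X n = {w. length w = n \<and> set w \<subseteq> X}"

definition tens :: "'x set \<Rightarrow> nat \<Rightarrow> ('x list \<Rightarrow> 'k::field) set" where
  "tens X n = {x. \<forall>w. w \<notin> words X n \<longrightarrow> x w = 0}"

definition idmat :: "'x list \<Rightarrow> 'x list \<Rightarrow> 'k::field" where
  "idmat u w = (if u = w then 1 else 0)"

definition mmul :: "'x set \<Rightarrow> nat \<Rightarrow> ('x list \<Rightarrow> 'x list \<Rightarrow> 'k::field)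
    \<Rightarrow> ('x list \<Rightarrow> 'x list \<Rightarrow> 'k) \<Rightarrow> ('x list \<Rightarrow> 'x list \<Rightarrow> 'k)" where
  "mmul X n A B = (\<lambda>u w. \<Sum>v\<in>words X n. A u v * B v w)"

definition meq :: "'x set \<Rightarrow> nat \<Rightarrow> ('x list \<Rightarrow> 'x list \<Rightarrow> 'k::field)
    \<Rightarrow> ('x list \<Rightarrow> 'x list \<Rightarrow> 'k) \<Rightarrow> bool" where
  "meq X n A B = (\<forall>u\<in>words X n. \<forall>w\<in>words X n. A u w = B u w)"

definition mapply :: "'x set \<Rightarrow> nat \<Rightarrow> ('x list \<Rightarrow> 'x list \<Rightarrow> 'k::field)
    \<Rightarrow> ('x list \<Rightarrow> 'k) \<Rightarrow> ('x list \<Rightarrow> 'k)" where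
  "mapply X n A x = (\<lambda>u. if u \<in> words X n then (\<Sum>w\<in>words X n. A u w * x w) else 0)"

definition minv :: "'x set \<Rightarrow> nat \<Rightarrow> ('x list \<Rightarrow> 'x list \<Rightarrow> 'k::field)
    \<Rightarrow> ('x list \<Rightarrow> 'x list \<Rightarrow> 'k)" where
  "minv X n M = (SOME S. meq X n (mmul X n S M) idmat \<and> meq X n (mmul X n M S) idmat)"

text \<open>id^{i} \<otimes> M \<otimes> id^{n-i-2} for an operator M on the second tensor power
  (0-based position i; so lift X n R (i-1) is the action of T_i).\<close>
definition lift :: "'x set \<Rightarrow> nat \<Rightarrow> ('x list \<Rightarrow> 'x list \<Rightarrow> 'k::field) \<Rightarrow> nat
    \<Rightarrow> ('x list \<Rightarrow> 'x list \<Rightarrow> 'k)" where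
  "lift X n M i = (\<lambda>u w. if take i u = take i w \<and> drop (i+2) u = drop (i+2) w
       then M (take 2 (drop i u)) (take 2 (drop i w)) else 0)"

definition hecke_symmetry :: "nat \<Rightarrow> 'k::field \<Rightarrow> (nat list \<Rightarrow> nat list \<Rightarrow> 'k) \<Rightarrow> bool" where
  "hecke_symmetry d q R \<longleftrightarrow>
     meq {..<d} 2 (mmul {..<d} 2 (\<lambda>u w. R u w + idmat u w) (\<lambda>u w. R u w - q * idmat u w))
        (\<lambda>_ _. 0) \<and>
     meq {..<d} 3 (mmul {..<d} 3 (lift {..<d} 3 R 0) (mmul {..<d} 3 (lift {..<d} 3 R 1) (lift {..<d} 3 R 0)))
                  (mmul {..<d} 3 (lift {..<d} 3 R 1) (mmul {..<d} 3 (lift {..<d} 3 R 0) (lift {..<d} 3 R 1)))"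

definition tmul :: "nat \<Rightarrow> ('x list \<Rightarrow> 'k::field) \<Rightarrow> ('x list \<Rightarrow> 'k) \<Rightarrow> ('x list \<Rightarrow> 'k)" where
  "tmul m x y = (\<lambda>w. x (take m w) * y (drop m w))"

definition lspan :: "('x \<Rightarrow> 'k::field) set \<Rightarrow> ('x \<Rightarrow> 'k) set" where
  "lspan S = {z. \<exists>F c. finite F \<and> F \<subseteq> S \<and> z = (\<lambda>w. \<Sum>f\<in>F. c f * f w)}"

text \<open>Degree-n component of the two-sided ideal of the tensor algebra T(X) generated
  by a set S of degree-2 tensors.\<close>
definition ideal_deg :: "'x set \<Rightarrow> nat \<Rightarrow> ('x list \<Rightarrow> 'k::field) set \<Rightarrow> ('x list \<Rightarrow> 'k) set" where
  "ideal_deg X n S = lspan {tmul (i+2) (tmul i x s) y | i x s y.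
      i + 2 \<le> n \<and> x \<in> tens X i \<and> s \<in> S \<and> y \<in> tens X (n - 2 - i)}"

text \<open>Basis of W = V'^* \<otimes> V: pairs (a,i), a < d' (dual basis of V'), i < d (basis of V).\<close>
definition Walph :: "nat \<Rightarrow> nat \<Rightarrow> (nat \<times> nat) set" where
  "Walph d' d = {..<d'} \<times> {..<d}"

text \<open>The operator calR on W \<otimes> W corresponding to (R'^*)^{-1} \<otimes> R; the matrix of the adjoint
  in the dual basis is the transpose.\<close>
definition calR :: "nat \<Rightarrow> (nat list \<Rightarrow> nat list \<Rightarrow> 'k::field) \<Rightarrow> (nat list \<Rightarrow> nat list \<Rightarrow> 'k)
    \<Rightarrow> ((nat \<times> nat) list \<Rightarrow> (nat \<times> nat) list \<Rightarrow> 'k)" where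
  "calR d' R' R = (\<lambda>u w. minv {..<d'} 2 (\<lambda>a b. R' b a) (map fst u) (map fst w)
                          * R (map snd u) (map snd w))"

definition A_rels :: "nat \<Rightarrow> nat \<Rightarrow> (nat list \<Rightarrow> nat list \<Rightarrow> 'k::field) \<Rightarrow> (nat list \<Rightarrow> nat list \<Rightarrow> 'k)
    \<Rightarrow> ((nat \<times> nat) list \<Rightarrow> 'k) set" where
  "A_rels d' d R' R = {mapply (Walph d' d) 2 (\<lambda>u w. calR d' R' R u w - idmat u w) x | x.
       x \<in> tens (Walph d' d) 2}"

text \<open>A_n(R',R) = W^{\<otimes>n} / A_ideal, with W^{\<otimes>n} = tens (Walph d' d) n.\<close>
definition A_ideal :: "nat \<Rightarrow> nat \<Rightarrow> (nat list \<Rightarrow> nat list \<Rightarrow> 'k::field) \<Rightarrow> (nat list \<Rightarrow> nat list \<Rightarrow> 'k)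
    \<Rightarrow> nat \<Rightarrow> ((nat \<times> nat) list \<Rightarrow> 'k) set" where
  "A_ideal d' d R' R n = ideal_deg (Walph d' d) n (A_rels d' d R' R)"

text \<open>Hom_{H_n}(V^{\<otimes>n}, V'^{\<otimes>n}): linear maps (matrices, rows indexed by words over {..<d'},
  columns by words over {..<d}) commuting with the action of all generators T_1..T_{n-1}.\<close>
definition HomH :: "nat \<Rightarrow> nat \<Rightarrow> (nat list \<Rightarrow> nat list \<Rightarrow> 'k::field) \<Rightarrow> (nat list \<Rightarrow> nat list \<Rightarrow> 'k)
    \<Rightarrow> nat \<Rightarrow> (nat list \<Rightarrow> nat list \<Rightarrow> 'k) set" where
  "HomH d d' R R' n = {M.
     (\<forall>u w. u \<notin> words {..<d'} n \<or> w \<notin> words {..<d} n \<longrightarrow> M u w = 0) \<and>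
     (\<forall>i. i + 2 \<le> n \<longrightarrow>
        (\<forall>u\<in>words {..<d'} n. \<forall>w\<in>words {..<d} n.
           (\<Sum>v\<in>words {..<d} n. M u v * lift {..<d} n R i v w)
         = (\<Sum>v\<in>words {..<d'} n. lift {..<d'} n R' i u v * M v w)))}"

text \<open>f is a linear functional on the space H of matrices (i.e. f restricted to H is in H^*).\<close>
definition lin_functional :: "('a \<Rightarrow> 'b \<Rightarrow> 'k::field) set \<Rightarrow> (('a \<Rightarrow> 'b \<Rightarrow> 'k) \<Rightarrow> 'k) \<Rightarrow> bool" where
  "lin_functional H f \<longleftrightarrow> (\<forall>M\<in>H. \<forall>N\<in>H. \<forall>a b. f (\<lambda>u w. a * M u w + b * N u w) = a * f M + b * f N)"

end

theory Submission
  imports Defs "HOL-Library.Function_Algebras" "HOL.Vector_Spaces"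
begin



lemma words_length: "u \<in> words X n \<Longrightarrow> length u = n" by (simp add: words_def)

lemma sum_fun_apply: "(sum f A) x = (\<Sum>a\<in>A. f a x)"
  by (induct A rule: infinite_finite_induct) auto

lemma finite_words: "finite X \<Longrightarrow> finite (words X n)"
proof -
  assume "finite X"
  have "words X n = {xs. set xs \<subseteq> X \<and> length xs = n}" by (auto simp: words_def)
  thus ?thesis using finite_lists_length_eq[OF \<open>finite X\<close>] by simp
qed

lemma words_zip_bij: "bij_betw (\<lambda>(u,w). zip u w) (words A n \<times> words B n) (words (A\<times>B) n)"
  unfolding bij_betw_def
proof
  show "inj_on (\<lambda>(u,w). zip u w) (words A n \<times> words B n)"
  proof (rule inj_onI)
    fix p p' assume "p \<in> words A n \<times> words B n" "p' \<in> words A n \<times> words B n"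
      and e0: "(\<lambda>(u,w). zip u w) p = (\<lambda>(u,w). zip u w) p'"
    obtain u w u' w' where pp: "p = (u,w)" "p' = (u',w')" by fastforce
    have "(u,w) \<in> words A n \<times> words B n" "(u',w') \<in> words A n \<times> words B n"
      and e: "zip u w = zip u' w'" using e0 pp \<open>p \<in> _\<close> \<open>p' \<in> _\<close> by auto
    hence l: "length u = n" "length w = n" "length u' = n" "length w' = n" by (auto simp: words_def)
    have "u = map fst (zip u w)" using l by simp
    also have "\<dots> = u'" using e l by simp
    moreover have "w = w'"
      using e l by (metis map_snd_zip)
    ultimately show "p = p'" using pp by simp
  qed
  show "(\<lambda>(u,w). zip u w) ` (words A n \<times> words B n) = words (A\<times>B) n"
  proof safe
    fix u w assume "u \<in> words A n" "w \<in> words B n"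
    thus "zip u w \<in> words (A\<times>B) n"
      by (auto simp: words_def dest: set_zip_leftD set_zip_rightD)
  next
    fix U assume U: "U \<in> words (A\<times>B) n"
    hence "U = (\<lambda>(u,w). zip u w) (map fst U, map snd U)" by (simp add: zip_map_fst_snd)
    moreover have "(map fst U, map snd U) \<in> words A n \<times> words B n"
      using U by (auto simp: words_def)
    ultimately show "U \<in> (\<lambda>(u,w). zip u w) ` (words A n \<times> words B n)" by blast
  qed
qed

lemma sum_words_zip:
  "(\<Sum>U\<in>words (A\<times>B) n. g U) = (\<Sum>u\<in>words A n. \<Sum>w\<in>words B n. g (zip u w))"
proof -
  have "(\<Sum>U\<in>words (A\<times>B) n. g U) = (\<Sum>p\<in>words A n \<times> words B n. g ((\<lambda>(u,w). zip u w) p))"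
    using sum.reindex_bij_betw[OF words_zip_bij, of g] by (simp only: comp_def)
  also have "\<dots> = (\<Sum>u\<in>words A n. \<Sum>w\<in>words B n. g (zip u w))"
    by (simp only: sum.cartesian_product case_prod_unfold)
  finally show ?thesis .
qed

lemma zip_in_words: "u \<in> words A n \<Longrightarrow> w \<in> words B n \<Longrightarrow> zip u w \<in> words (A\<times>B) n"
  by (auto simp: words_def dest: set_zip_leftD set_zip_rightD)

lemma zip_inj_words: "u \<in> words A n \<Longrightarrow> w \<in> words B n \<Longrightarrow> u' \<in> words A n \<Longrightarrow> w' \<in> words B n
   \<Longrightarrow> (zip u w = zip u' w') = (u = u' \<and> w = w')"
  by (metis map_fst_zip map_snd_zip words_length)

lemma words_append_bij: "bij_betw (\<lambda>(u,v). u @ v) (words X a \<times> words X b) (words X (a+b))"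
  unfolding bij_betw_def
proof
  show "inj_on (\<lambda>(u,v). u @ v) (words X a \<times> words X b)"
  proof (rule inj_onI)
    fix p p' assume h: "p \<in> words X a \<times> words X b" "p' \<in> words X a \<times> words X b"
      and e0: "(\<lambda>(u,v). u @ v) p = (\<lambda>(u,v). u @ v) p'"
    obtain u w u' w' where pp: "p = (u,w)" "p' = (u',w')" by fastforce
    have "length u = a" "length u' = a" using h pp by (auto simp: words_def)
    moreover have "u @ w = u' @ w'" using e0 pp by simp
    ultimately show "p = p'" using pp by simp
  qed
  show "(\<lambda>(u,v). u @ v) ` (words X a \<times> words X b) = words X (a+b)"
  proof safe
    fix U assume U: "U \<in> words X (a+b)"
    hence "U = (\<lambda>(u,v). u @ v) (take a U, drop a U)" by simp
    moreover have "(take a U, drop a U) \<in> words X a \<times> words X b"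
      using U by (auto simp: words_def dest: in_set_takeD in_set_dropD)
    ultimately show "U \<in> (\<lambda>(u,v). u @ v) ` (words X a \<times> words X b)" by blast
  next
    fix u v assume "u \<in> words X a" "v \<in> words X b"
    thus "u @ v \<in> words X (a+b)" by (simp add: words_def)
  qed
qed

lemma words_append_in: "u \<in> words X a \<Longrightarrow> v \<in> words X b \<Longrightarrow> u @ v \<in> words X (a+b)"
  by (auto simp: words_def)

lemma sum_words_append:
  "(\<Sum>U\<in>words X (a+b). g U) = (\<Sum>u\<in>words X a. \<Sum>v\<in>words X b. g (u @ v))"
proof -
  have "(\<Sum>U\<in>words X (a+b). g U) = (\<Sum>p\<in>words X a \<times> words X b. g ((\<lambda>(u,v). u@v) p))"
    using sum.reindex_bij_betw[OF words_append_bij, of g] by (simp only: comp_def)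
  also have "\<dots> = (\<Sum>u\<in>words X a. \<Sum>v\<in>words X b. g (u @ v))"
    by (simp only: sum.cartesian_product case_prod_unfold)
  finally show ?thesis .
qed

lemma sum_words3:
  "(\<Sum>U\<in>words X (i+2+k). g U) = (\<Sum>u1\<in>words X i. \<Sum>a\<in>words X 2. \<Sum>u3\<in>words X k. g (u1 @ a @ u3))"
proof -
  have "(\<Sum>U\<in>words X (i+2+k). g U) = (\<Sum>U\<in>words X (i+(2+k)). g U)"
    by (simp only: add.assoc)
  also have "\<dots> = (\<Sum>u1\<in>words X i. \<Sum>v\<in>words X (2+k). g (u1 @ v))"
    by (rule sum_words_append)
  also have "\<dots> = (\<Sum>u1\<in>words X i. \<Sum>a\<in>words X 2. \<Sum>u3\<in>words X k. g (u1 @ a @ u3))"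
    by (rule sum.cong[OF refl], rule sum_words_append)
  finally show ?thesis .
qed



lemma vs_mult: "vector_space ((*) :: 'k::field \<Rightarrow> 'k \<Rightarrow> 'k)"
  by unfold_locales (auto simp: algebra_simps)

context vector_space
begin

lemma sep_functional:
  assumes "x \<notin> span S"
  shows "\<exists>g. Vector_Spaces.linear scale ((*) :: 'a \<Rightarrow> 'a \<Rightarrow> 'a) g \<and> (\<forall>v\<in>S. g v = 0) \<and> g x = 1"
proof -
  interpret P: vector_space_pair scale "(*) :: 'a \<Rightarrow> 'a \<Rightarrow> 'a"
    unfolding vector_space_pair_def using vs_mult vector_space_axioms by blast
  obtain B where B: "B \<subseteq> span S" "independent B" "span S \<subseteq> span B"
    using maximal_independent_subset[of "span S"] by blast
  have "span B \<subseteq> span S" using B(1) by (simp add: span_minimal subspace_span)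
  hence xB: "x \<notin> span B" using assms by blast
  hence "x \<notin> B" using span_base by blast
  have ind: "independent (insert x B)" using B(2) xB by (simp add: independent_insertI)
  obtain g where g: "Vector_Spaces.linear scale (*) g" "\<forall>v\<in>insert x B. g v = (if v = x then 1 else 0)"
    using P.linear_independent_extend[OF ind, of "\<lambda>v. if v = x then 1 else 0"] by blast
  interpret L: linear scale "(*) :: 'a \<Rightarrow> 'a \<Rightarrow> 'a" g by (rule g(1))
  have "subspace {v. g v = 0}"
    unfolding subspace_def by (auto simp: L.add L.scale)
  moreover have "B \<subseteq> {v. g v = 0}" using g(2) \<open>x \<notin> B\<close> by auto
  ultimately have "span B \<subseteq> {v. g v = 0}" by (rule span_minimal[rotated])
  hence "\<forall>v\<in>S. g v = 0" using B(3) span_base by blast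
  moreover have "g x = 1" using g(2) by simp
  ultimately show ?thesis using g(1) by blast
qed

lemma ext_functional:
  assumes H: "subspace H"
    and add: "\<And>M N. M \<in> H \<Longrightarrow> N \<in> H \<Longrightarrow> f (M + N) = f M + f N"
    and sc: "\<And>M c. M \<in> H \<Longrightarrow> f (scale c M) = c * f M"
  shows "\<exists>F. Vector_Spaces.linear scale ((*) :: 'a \<Rightarrow> 'a \<Rightarrow> 'a) F \<and> (\<forall>M\<in>H. F M = f M)"
proof -
  interpret P: vector_space_pair scale "(*) :: 'a \<Rightarrow> 'a \<Rightarrow> 'a"
    unfolding vector_space_pair_def using vs_mult vector_space_axioms by blast
  obtain B where B: "B \<subseteq> H" "independent B" "H \<subseteq> span B"
    using maximal_independent_subset[of H] by blast
  obtain F where F: "Vector_Spaces.linear scale (*) F" "\<forall>v\<in>B. F v = f v"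
    using P.linear_independent_extend[OF B(2)] by blast
  interpret L: linear scale "(*) :: 'a \<Rightarrow> 'a \<Rightarrow> 'a" F by (rule F(1))
  have "subspace {v. v \<in> H \<and> F v = f v}"
    unfolding subspace_def
  proof (intro conjI allI ballI impI)
    show "0 \<in> {v. v \<in> H \<and> F v = f v}"
      using H sc[of 0 0] by (simp add: subspace_0)
  next
    fix x y assume "x \<in> {v. v \<in> H \<and> F v = f v}" "y \<in> {v. v \<in> H \<and> F v = f v}"
    thus "x + y \<in> {v. v \<in> H \<and> F v = f v}" using H add by (simp add: L.add subspace_add)
  next
    fix c x assume "x \<in> {v. v \<in> H \<and> F v = f v}"
    thus "scale c x \<in> {v. v \<in> H \<and> F v = f v}" using H sc by (simp add: L.scale subspace_scale)
  qed
  hence "span B \<subseteq> {v. v \<in> H \<and> F v = f v}"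
    using B(1) F(2) by (intro span_minimal) auto
  thus ?thesis using B(3) F(1) by blast
qed

end



lemma idmat_sym: "idmat u v = idmat v u" by (auto simp: idmat_def)

lemma idmat_sum_right: "finite S \<Longrightarrow> u \<in> S \<Longrightarrow> (\<Sum>v\<in>S. f v * idmat v u) = (f u :: 'k::field)"
proof -
  assume "finite S" "u \<in> S"
  have "(\<Sum>v\<in>S. f v * idmat v u) = (\<Sum>v\<in>S. if v = u then f u else 0)"
    by (rule sum.cong) (auto simp: idmat_def)
  thus ?thesis using \<open>finite S\<close> \<open>u \<in> S\<close> by simp
qed

lemma idmat_sum_left: "finite S \<Longrightarrow> u \<in> S \<Longrightarrow> (\<Sum>v\<in>S. idmat u v * f v) = (f u :: 'k::field)"
proof -
  assume "finite S" "u \<in> S"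
  have "(\<Sum>v\<in>S. idmat u v * f v) = (\<Sum>v\<in>S. if v = u then f u else 0)"
    by (rule sum.cong) (auto simp: idmat_def)
  thus ?thesis using \<open>finite S\<close> \<open>u \<in> S\<close> by simp
qed

lemma idmat_sum_left2: "finite S \<Longrightarrow> u \<in> S \<Longrightarrow> (\<Sum>v\<in>S. idmat v u * f v) = (f u :: 'k::field)"
  by (simp add: idmat_sym[of _ u] idmat_sum_left)

lemma core_comm_fix:
  fixes Si R' :: "'x list \<Rightarrow> 'x list \<Rightarrow> 'k::field" and R :: "'y \<Rightarrow> 'y \<Rightarrow> 'k" and N :: "'x list \<Rightarrow> 'y \<Rightarrow> 'k"
  assumes fA: "finite A" and fB: "finite B"
    and I1: "\<And>c a'. c \<in> A \<Longrightarrow> a' \<in> A \<Longrightarrow> (\<Sum>a\<in>A. R' a c * Si a a') = idmat c a'"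
    and I2: "\<And>a'' a. a'' \<in> A \<Longrightarrow> a \<in> A \<Longrightarrow> (\<Sum>c\<in>A. Si a'' c * R' a c) = idmat a'' a"
  shows "(\<forall>a\<in>A. \<forall>b'\<in>B. (\<Sum>b\<in>B. N a b * R b b') = (\<Sum>c\<in>A. R' a c * N c b'))
     \<longleftrightarrow> (\<forall>a'\<in>A. \<forall>b'\<in>B. (\<Sum>a\<in>A. \<Sum>b\<in>B. Si a a' * R b b' * N a b) = N a' b')"
proof
  assume C: "\<forall>a\<in>A. \<forall>b'\<in>B. (\<Sum>b\<in>B. N a b * R b b') = (\<Sum>c\<in>A. R' a c * N c b')"
  show "\<forall>a'\<in>A. \<forall>b'\<in>B. (\<Sum>a\<in>A. \<Sum>b\<in>B. Si a a' * R b b' * N a b) = N a' b'"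
  proof (intro ballI)
    fix a' b' assume a': "a' \<in> A" and b': "b' \<in> B"
    have "(\<Sum>a\<in>A. \<Sum>b\<in>B. Si a a' * R b b' * N a b) = (\<Sum>a\<in>A. Si a a' * (\<Sum>b\<in>B. N a b * R b b'))"
      by (simp add: sum_distrib_left mult.commute mult.left_commute)
    also have "\<dots> = (\<Sum>a\<in>A. Si a a' * (\<Sum>c\<in>A. R' a c * N c b'))"
      using C b' by simp
    also have "\<dots> = (\<Sum>a\<in>A. \<Sum>c\<in>A. R' a c * Si a a' * N c b')"
      by (simp add: sum_distrib_left mult.commute mult.left_commute)
    also have "\<dots> = (\<Sum>c\<in>A. \<Sum>a\<in>A. R' a c * Si a a' * N c b')"
      by (rule sum.swap)
    also have "\<dots> = (\<Sum>c\<in>A. (\<Sum>a\<in>A. R' a c * Si a a') * N c b')"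
      by (simp add: sum_distrib_right)
    also have "\<dots> = (\<Sum>c\<in>A. idmat c a' * N c b')"
      using I1 a' by simp
    also have "\<dots> = N a' b'"
      using fA a' by (rule idmat_sum_left2)
    finally show "(\<Sum>a\<in>A. \<Sum>b\<in>B. Si a a' * R b b' * N a b) = N a' b'" .
  qed
next
  assume F: "\<forall>a'\<in>A. \<forall>b'\<in>B. (\<Sum>a\<in>A. \<Sum>b\<in>B. Si a a' * R b b' * N a b) = N a' b'"
  show "\<forall>a\<in>A. \<forall>b'\<in>B. (\<Sum>b\<in>B. N a b * R b b') = (\<Sum>c\<in>A. R' a c * N c b')"
  proof (intro ballI)
    fix a b' assume a: "a \<in> A" and b': "b' \<in> B"
    have "(\<Sum>c\<in>A. R' a c * N c b') = (\<Sum>c\<in>A. R' a c * (\<Sum>a''\<in>A. \<Sum>b\<in>B. Si a'' c * R b b' * N a'' b))"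
      using F b' by simp
    also have "\<dots> = (\<Sum>c\<in>A. \<Sum>a''\<in>A. Si a'' c * R' a c * (\<Sum>b\<in>B. N a'' b * R b b'))"
      by (simp add: sum_distrib_left mult.commute mult.left_commute)
    also have "\<dots> = (\<Sum>a''\<in>A. \<Sum>c\<in>A. Si a'' c * R' a c * (\<Sum>b\<in>B. N a'' b * R b b'))"
      by (rule sum.swap)
    also have "\<dots> = (\<Sum>a''\<in>A. (\<Sum>c\<in>A. Si a'' c * R' a c) * (\<Sum>b\<in>B. N a'' b * R b b'))"
      by (simp add: sum_distrib_right)
    also have "\<dots> = (\<Sum>a''\<in>A. idmat a'' a * (\<Sum>b\<in>B. N a'' b * R b b'))"
      using I2 a by simp
    also have "\<dots> = (\<Sum>b\<in>B. N a b * R b b')"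
      using fA a by (rule idmat_sum_left2)
    finally show "(\<Sum>b\<in>B. N a b * R b b') = (\<Sum>c\<in>A. R' a c * N c b')" by simp
  qed
qed

lemma minv_hecke:
  fixes R :: "nat list \<Rightarrow> nat list \<Rightarrow> 'k::field"
  assumes q: "q \<noteq> 0" and h: "hecke_symmetry d q R"
  shows "meq {..<d} 2 (mmul {..<d} 2 (minv {..<d} 2 (\<lambda>a b. R b a)) (\<lambda>a b. R b a)) idmat
       \<and> meq {..<d} 2 (mmul {..<d} 2 (\<lambda>a b. R b a) (minv {..<d} 2 (\<lambda>a b. R b a))) idmat"
proof -
  let ?W = "words {..<d} 2"
  have fW: "finite ?W" by (simp add: finite_words)
  have sq: "(\<Sum>v\<in>?W. R w v * R v u) = (q - 1) * R w u + q * idmat w u" if "w \<in> ?W" "u \<in> ?W" for w u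
  proof -
    have "0 = (\<Sum>v\<in>?W. (R w v + idmat w v) * (R v u - q * idmat v u))"
      using h that unfolding hecke_symmetry_def meq_def mmul_def by simp
    also have "\<dots> = (\<Sum>v\<in>?W. R w v * R v u) - q * (\<Sum>v\<in>?W. R w v * idmat v u)
        + (\<Sum>v\<in>?W. idmat w v * R v u) - q * (\<Sum>v\<in>?W. idmat w v * idmat v u)"
      by (simp add: algebra_simps sum.distrib sum_subtractf sum_distrib_left)
    also have "\<dots> = (\<Sum>v\<in>?W. R w v * R v u) - q * R w u + R w u - q * idmat w u"
      using fW that by (simp add: idmat_sum_right idmat_sum_left)
    finally show ?thesis by (simp add: algebra_simps)
  qed
  define T where "T = (\<lambda>u w. inverse q * (R w u - (q - 1) * idmat u w))"
  have "meq {..<d} 2 (mmul {..<d} 2 T (\<lambda>a b. R b a)) idmat \<and> meq {..<d} 2 (mmul {..<d} 2 (\<lambda>a b. R b a) T) idmat"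
  proof (unfold meq_def mmul_def, intro conjI ballI)
    fix u w assume u: "u \<in> ?W" and w: "w \<in> ?W"
    have "(\<Sum>v\<in>?W. T u v * R w v) = inverse q * (\<Sum>v\<in>?W. R w v * R v u) - inverse q * (q - 1) * (\<Sum>v\<in>?W. idmat u v * R w v)"
      by (simp add: T_def sum_distrib_left sum_subtractf algebra_simps sum.distrib)
    also have "\<dots> = inverse q * ((q - 1) * R w u + q * idmat w u) - inverse q * (q - 1) * R w u"
      using sq[OF w u] fW u by (simp add: idmat_sum_left)
    also have "\<dots> = idmat u w"
      using q by (simp add: algebra_simps idmat_sym[of w u] mult.assoc[symmetric])
    finally show "(\<Sum>v\<in>?W. T u v * R w v) = idmat u w" .
    have "(\<Sum>v\<in>?W. R v u * T v w) = inverse q * (\<Sum>v\<in>?W. R w v * R v u) - inverse q * (q - 1) * (\<Sum>v\<in>?W. R v u * idmat v w)"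
      by (simp add: T_def sum_distrib_left sum_subtractf algebra_simps sum.distrib)
    also have "\<dots> = inverse q * ((q - 1) * R w u + q * idmat w u) - inverse q * (q - 1) * R w u"
      using sq[OF w u] fW w by (simp add: idmat_sum_right)
    also have "\<dots> = idmat u w"
      using q by (simp add: algebra_simps idmat_sym[of w u] mult.assoc[symmetric])
    finally show "(\<Sum>v\<in>?W. R v u * T v w) = idmat u w" .
  qed
  thus ?thesis unfolding minv_def by (rule someI[where P="\<lambda>S. meq {..<d} 2 (mmul {..<d} 2 S (\<lambda>a b. R b a)) idmat \<and> meq {..<d} 2 (mmul {..<d} 2 (\<lambda>a b. R b a) S) idmat"])
qed



definition pairing :: "nat \<Rightarrow> nat \<Rightarrow> nat \<Rightarrow> ((nat \<times> nat) list \<Rightarrow> 'k) \<Rightarrow> (nat list \<Rightarrow> nat list \<Rightarrow> 'k) \<Rightarrow> 'k::field" where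
  "pairing d' d n x M = (\<Sum>u\<in>words {..<d'} n. \<Sum>w\<in>words {..<d} n. x (zip u w) * M u w)"

lemma lift_split:
  assumes "length u1 = i" "length v1 = i" "length a = 2" "length b = 2"
  shows "lift X n R i (u1 @ a @ u3) (v1 @ b @ v3) = (if u1 = v1 \<and> u3 = v3 then R a b else 0)"
  using assms by (simp add: lift_def)

lemma sum_delta_if: "finite S \<Longrightarrow> a \<in> S \<Longrightarrow> (\<Sum>x\<in>S. if x = a then f x else 0) = f a"
  by simp

lemma lift_sum_right:
  assumes fX: "finite X" and w1: "w1 \<in> words X i" and b': "b' \<in> words X 2" and w3: "w3 \<in> words X k"
  shows "(\<Sum>v\<in>words X (i+2+k). G v * lift X n R i v (w1 @ b' @ w3)) = (\<Sum>b\<in>words X 2. G (w1 @ b @ w3) * R b b')"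
proof -
  have "(\<Sum>v\<in>words X (i+2+k). G v * lift X n R i v (w1 @ b' @ w3))
     = (\<Sum>v1\<in>words X i. \<Sum>b\<in>words X 2. \<Sum>v3\<in>words X k. G (v1 @ b @ v3) * lift X n R i (v1 @ b @ v3) (w1 @ b' @ w3))"
    by (rule sum_words3)
  also have "\<dots> = (\<Sum>v1\<in>words X i. if v1 = w1 then (\<Sum>b\<in>words X 2. \<Sum>v3\<in>words X k. if v3 = w3 then G (v1 @ b @ v3) * R b b' else 0) else 0)"
  proof (rule sum.cong[OF refl])
    fix v1 assume v1: "v1 \<in> words X i"
    show "(\<Sum>b\<in>words X 2. \<Sum>v3\<in>words X k. G (v1 @ b @ v3) * lift X n R i (v1 @ b @ v3) (w1 @ b' @ w3))
      = (if v1 = w1 then (\<Sum>b\<in>words X 2. \<Sum>v3\<in>words X k. if v3 = w3 then G (v1 @ b @ v3) * R b b' else 0) else 0)"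
      using v1 w1 b' by (auto simp: lift_split words_length intro!: sum.cong sum.neutral)
  qed
  also have "\<dots> = (\<Sum>b\<in>words X 2. \<Sum>v3\<in>words X k. if v3 = w3 then G (w1 @ b @ v3) * R b b' else 0)"
    using w1 fX by (simp add: finite_words)
  also have "\<dots> = (\<Sum>b\<in>words X 2. G (w1 @ b @ w3) * R b b')"
    using w3 fX by (simp add: finite_words)
  finally show ?thesis .
qed

lemma lift_sum_left:
  assumes fX: "finite X" and u1: "u1 \<in> words X i" and a: "a \<in> words X 2" and u3: "u3 \<in> words X k"
  shows "(\<Sum>v\<in>words X (i+2+k). lift X n R i (u1 @ a @ u3) v * G v) = (\<Sum>c\<in>words X 2. R a c * G (u1 @ c @ u3))"
proof -
  have "(\<Sum>v\<in>words X (i+2+k). lift X n R i (u1 @ a @ u3) v * G v)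
     = (\<Sum>v1\<in>words X i. \<Sum>c\<in>words X 2. \<Sum>v3\<in>words X k. lift X n R i (u1 @ a @ u3) (v1 @ c @ v3) * G (v1 @ c @ v3))"
    by (rule sum_words3)
  also have "\<dots> = (\<Sum>v1\<in>words X i. if v1 = u1 then (\<Sum>c\<in>words X 2. \<Sum>v3\<in>words X k. if v3 = u3 then R a c * G (v1 @ c @ v3) else 0) else 0)"
  proof (rule sum.cong[OF refl])
    fix v1 assume v1: "v1 \<in> words X i"
    show "(\<Sum>c\<in>words X 2. \<Sum>v3\<in>words X k. lift X n R i (u1 @ a @ u3) (v1 @ c @ v3) * G (v1 @ c @ v3))
      = (if v1 = u1 then (\<Sum>c\<in>words X 2. \<Sum>v3\<in>words X k. if v3 = u3 then R a c * G (v1 @ c @ v3) else 0) else 0)"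
      using v1 u1 a by (auto simp: lift_split words_length intro!: sum.cong sum.neutral)
  qed
  also have "\<dots> = (\<Sum>c\<in>words X 2. \<Sum>v3\<in>words X k. if v3 = u3 then R a c * G (u1 @ c @ v3) else 0)"
    using u1 fX by (simp add: finite_words)
  also have "\<dots> = (\<Sum>c\<in>words X 2. R a c * G (u1 @ c @ u3))"
    using u3 fX by (simp add: finite_words)
  finally show ?thesis .
qed



lemma sum_prod_nest: "(\<Sum>q\<in>A\<times>B. f q) = (\<Sum>a\<in>A. \<Sum>b\<in>B. f (a,b))"
proof -
  have "(\<Sum>a\<in>A. \<Sum>b\<in>B. f (a,b)) = (\<Sum>(a,b)\<in>A\<times>B. f (a,b))" by (rule sum.cartesian_product)
  thus ?thesis by (simp only: case_prod_eta)
qed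

lemma split3_bij:
  "bij_betw (\<lambda>(p1,p3,p2). (fst p1 @ fst p2 @ fst p3, snd p1 @ snd p2 @ snd p3))
     ((words A i \<times> words B i) \<times> (words A k \<times> words B k) \<times> (words A 2 \<times> words B 2))
     (words A (i+2+k) \<times> words B (i+2+k))"
  unfolding bij_betw_def
proof
  let ?h = "\<lambda>(p1,p3,p2). (fst p1 @ fst p2 @ fst p3, snd p1 @ snd p2 @ snd p3)"
  show "inj_on ?h ((words A i \<times> words B i) \<times> (words A k \<times> words B k) \<times> (words A 2 \<times> words B 2))"
  proof (rule inj_onI)
    fix p p' assume hp: "p \<in> (words A i \<times> words B i) \<times> (words A k \<times> words B k) \<times> (words A 2 \<times> words B 2)"
      and hp': "p' \<in> (words A i \<times> words B i) \<times> (words A k \<times> words B k) \<times> (words A 2 \<times> words B 2)"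
      and e: "?h p = ?h p'"
    obtain p1 p3 p2 where "p = (p1,p3,p2)" by (rule prod_cases3)
    moreover obtain u1 w1 where "p1 = (u1,w1)" by (rule prod.exhaust)
    moreover obtain u3 w3 where "p3 = (u3,w3)" by (rule prod.exhaust)
    moreover obtain a b where "p2 = (a,b)" by (rule prod.exhaust)
    ultimately have pp: "p = ((u1,w1),(u3,w3),(a,b))" by simp
    obtain p1' p3' p2' where "p' = (p1',p3',p2')" by (rule prod_cases3)
    moreover obtain u1' w1' where "p1' = (u1',w1')" by (rule prod.exhaust)
    moreover obtain u3' w3' where "p3' = (u3',w3')" by (rule prod.exhaust)
    moreover obtain a' b' where "p2' = (a',b')" by (rule prod.exhaust)
    ultimately have pp': "p' = ((u1',w1'),(u3',w3'),(a',b'))" by simp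
    have l: "length u1 = i" "length w1 = i" "length a = 2" "length b = 2"
         "length u1' = i" "length w1' = i" "length a' = 2" "length b' = 2"
      using hp hp' pp pp' by (auto simp: words_def)
    have "u1 @ a @ u3 = u1' @ a' @ u3'" "w1 @ b @ w3 = w1' @ b' @ w3'" using e pp pp' by auto
    thus "p = p'" using l pp pp' by simp
  qed
  show "?h ` ((words A i \<times> words B i) \<times> (words A k \<times> words B k) \<times> (words A 2 \<times> words B 2))
     = words A (i+2+k) \<times> words B (i+2+k)"
  proof (intro subset_antisym subsetI)
    fix x assume "x \<in> ?h ` ((words A i \<times> words B i) \<times> (words A k \<times> words B k) \<times> (words A 2 \<times> words B 2))"
    then obtain u1 w1 u3 w3 a b where "u1 \<in> words A i" "w1 \<in> words B i" "u3 \<in> words A k" "w3 \<in> words B k"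
      "a \<in> words A 2" "b \<in> words B 2" "x = (u1 @ a @ u3, w1 @ b @ w3)" by auto
    thus "x \<in> words A (i+2+k) \<times> words B (i+2+k)" by (auto simp: words_def)
  next
    fix x assume "x \<in> words A (i+2+k) \<times> words B (i+2+k)"
    then obtain u w where u: "u \<in> words A (i+2+k)" and w: "w \<in> words B (i+2+k)" and x: "x = (u,w)" by auto
    let ?p = "((take i u, take i w), (drop (i+2) u, drop (i+2) w), (take 2 (drop i u), take 2 (drop i w)))"
    have "?p \<in> (words A i \<times> words B i) \<times> (words A k \<times> words B k) \<times> (words A 2 \<times> words B 2)"
      using u w by (auto simp: words_def dest: in_set_takeD in_set_dropD)
    moreover have "?h ?p = (u, w)"
    proof -
      have e: "drop (i+2) u = drop 2 (drop i u)" "drop (i+2) w = drop 2 (drop i w)" by (simp_all add: add.commute)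
      have "take i u @ take 2 (drop i u) @ drop (i+2) u = u"
        "take i w @ take 2 (drop i w) @ drop (i+2) w = w" unfolding e by (simp_all only: append_take_drop_id)
      thus ?thesis by simp
    qed
    ultimately show "x \<in> ?h ` ((words A i \<times> words B i) \<times> (words A k \<times> words B k) \<times> (words A 2 \<times> words B 2))"
      unfolding x by (intro image_eqI[of _ ?h ?p]) simp_all
  qed
qed

lemma sum_split3:
  "(\<Sum>p\<in>words A (i+2+k) \<times> words B (i+2+k). F p)
   = (\<Sum>p1\<in>words A i \<times> words B i. \<Sum>p3\<in>words A k \<times> words B k. \<Sum>p2\<in>words A 2 \<times> words B 2.
        F (fst p1 @ fst p2 @ fst p3, snd p1 @ snd p2 @ snd p3))"
proof -
  have "(\<Sum>p\<in>words A (i+2+k) \<times> words B (i+2+k). F p)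
    = (\<Sum>q\<in>(words A i \<times> words B i) \<times> (words A k \<times> words B k) \<times> (words A 2 \<times> words B 2).
         F ((\<lambda>(p1,p3,p2). (fst p1 @ fst p2 @ fst p3, snd p1 @ snd p2 @ snd p3)) q))"
    using sum.reindex_bij_betw[OF split3_bij, of F] by (simp only: comp_def)
  also have "\<dots> = (\<Sum>p1\<in>words A i \<times> words B i. \<Sum>q\<in>(words A k \<times> words B k) \<times> (words A 2 \<times> words B 2).
         F ((\<lambda>(p1,p3,p2). (fst p1 @ fst p2 @ fst p3, snd p1 @ snd p2 @ snd p3)) (p1, q)))"
    by (rule sum_prod_nest)
  also have "\<dots> = (\<Sum>p1\<in>words A i \<times> words B i. \<Sum>p3\<in>words A k \<times> words B k. \<Sum>p2\<in>words A 2 \<times> words B 2.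
         F ((\<lambda>(p1,p3,p2). (fst p1 @ fst p2 @ fst p3, snd p1 @ snd p2 @ snd p3)) (p1, p3, p2)))"
    by (rule sum.cong[OF refl], rule sum_prod_nest)
  finally show ?thesis by simp
qed

lemma tmul_eval:
  assumes "length u1 = i" "length w1 = i" "length a = 2" "length b = 2" "length u3 = length w3"
  shows "tmul (i+2) (tmul i y s) z (zip (u1 @ a @ u3) (w1 @ b @ w3)) = y (zip u1 w1) * s (zip a b) * z (zip u3 w3)"
  using assms by (simp add: tmul_def)

lemma gen_pair:
  "pairing d' d (i+2+k) (tmul (i+2) (tmul i y s) z) M =
   (\<Sum>p1\<in>words {..<d'} i \<times> words {..<d} i. \<Sum>p3\<in>words {..<d'} k \<times> words {..<d} k.
      y (zip (fst p1) (snd p1)) * z (zip (fst p3) (snd p3)) *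
      (\<Sum>p2\<in>words {..<d'} 2 \<times> words {..<d} 2. s (zip (fst p2) (snd p2)) *
          M (fst p1 @ fst p2 @ fst p3) (snd p1 @ snd p2 @ snd p3)))"
proof -
  have "pairing d' d (i+2+k) (tmul (i+2) (tmul i y s) z) M =
     (\<Sum>p\<in>words {..<d'} (i+2+k) \<times> words {..<d} (i+2+k). tmul (i+2) (tmul i y s) z (zip (fst p) (snd p)) * M (fst p) (snd p))"
    unfolding pairing_def by (simp only: sum.cartesian_product case_prod_unfold)
  also have "\<dots> = (\<Sum>p1\<in>words {..<d'} i \<times> words {..<d} i. \<Sum>p3\<in>words {..<d'} k \<times> words {..<d} k.
      \<Sum>p2\<in>words {..<d'} 2 \<times> words {..<d} 2.
      tmul (i+2) (tmul i y s) z (zip (fst p1 @ fst p2 @ fst p3) (snd p1 @ snd p2 @ snd p3)) *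
          M (fst p1 @ fst p2 @ fst p3) (snd p1 @ snd p2 @ snd p3))"
    by (subst sum_split3) (simp only: fst_conv snd_conv)
  also have "\<dots> = (\<Sum>p1\<in>words {..<d'} i \<times> words {..<d} i. \<Sum>p3\<in>words {..<d'} k \<times> words {..<d} k.
      \<Sum>p2\<in>words {..<d'} 2 \<times> words {..<d} 2.
      y (zip (fst p1) (snd p1)) * z (zip (fst p3) (snd p3)) * (s (zip (fst p2) (snd p2)) *
          M (fst p1 @ fst p2 @ fst p3) (snd p1 @ snd p2 @ snd p3)))"
    by (intro sum.cong refl, subst tmul_eval) (auto simp: words_def)
  also have "\<dots> = (\<Sum>p1\<in>words {..<d'} i \<times> words {..<d} i. \<Sum>p3\<in>words {..<d'} k \<times> words {..<d} k.
      y (zip (fst p1) (snd p1)) * z (zip (fst p3) (snd p3)) *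
      (\<Sum>p2\<in>words {..<d'} 2 \<times> words {..<d} 2. s (zip (fst p2) (snd p2)) *
          M (fst p1 @ fst p2 @ fst p3) (snd p1 @ snd p2 @ snd p3)))"
    by (simp only: sum_distrib_left)
  finally show ?thesis .
qed



lemma inner_s:
  fixes R R' :: "nat list \<Rightarrow> nat list \<Rightarrow> 'k::field"
  assumes a: "a \<in> words {..<d'} 2" and b: "b \<in> words {..<d} 2"
  shows "mapply (Walph d' d) 2 (\<lambda>u w. calR d' R' R u w - idmat u w) t (zip a b)
    = (\<Sum>p\<in>words {..<d'} 2 \<times> words {..<d} 2.
        (minv {..<d'} 2 (\<lambda>a b. R' b a) a (fst p) * R b (snd p) - idmat a (fst p) * idmat b (snd p)) * t (zip (fst p) (snd p)))"
proof -
  have z: "zip a b \<in> words (Walph d' d) 2" using a b by (simp add: Walph_def zip_in_words)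
  have "mapply (Walph d' d) 2 (\<lambda>u w. calR d' R' R u w - idmat u w) t (zip a b)
     = (\<Sum>U\<in>words ({..<d'} \<times> {..<d}) 2. (calR d' R' R (zip a b) U - idmat (zip a b) U) * t U)"
    using z by (simp add: mapply_def Walph_def)
  also have "\<dots> = (\<Sum>a'\<in>words {..<d'} 2. \<Sum>b'\<in>words {..<d} 2.
       (calR d' R' R (zip a b) (zip a' b') - idmat (zip a b) (zip a' b')) * t (zip a' b'))"
    by (rule sum_words_zip)
  also have "\<dots> = (\<Sum>a'\<in>words {..<d'} 2. \<Sum>b'\<in>words {..<d} 2.
       (minv {..<d'} 2 (\<lambda>a b. R' b a) a a' * R b b' - idmat a a' * idmat b b') * t (zip a' b'))"
  proof (intro sum.cong refl)
    fix a' b' assume a': "a' \<in> words {..<d'} 2" and b': "b' \<in> words {..<d} 2"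
    have l: "length a = length b" "length a' = length b'" using a b a' b' by (simp_all add: words_def)
    have id: "idmat (zip a b) (zip a' b') = idmat a a' * idmat b b'"
      using zip_inj_words[OF a b a' b'] by (simp add: idmat_def)
    show "(calR d' R' R (zip a b) (zip a' b') - idmat (zip a b) (zip a' b')) * t (zip a' b') =
       (minv {..<d'} 2 (\<lambda>a b. R' b a) a a' * R b b' - idmat a a' * idmat b b') * t (zip a' b')"
      using l by (simp add: calR_def id)
  qed
  also have "\<dots> = (\<Sum>p\<in>words {..<d'} 2 \<times> words {..<d} 2.
        (minv {..<d'} 2 (\<lambda>a b. R' b a) a (fst p) * R b (snd p) - idmat a (fst p) * idmat b (snd p)) * t (zip (fst p) (snd p)))"
    by (simp only: sum_prod_nest fst_conv snd_conv)
  finally show ?thesis .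
qed

lemma inner_zero:
  fixes R R' Si :: "nat list \<Rightarrow> nat list \<Rightarrow> 'k::field" and N :: "nat list \<Rightarrow> nat list \<Rightarrow> 'k"
  assumes fA: "finite A" and fB: "finite B"
    and fx: "\<forall>a'\<in>A. \<forall>b'\<in>B. (\<Sum>a\<in>A. \<Sum>b\<in>B. Si a a' * R b b' * N a b) = N a' b'"
  shows "(\<Sum>p2\<in>A \<times> B. (\<Sum>p\<in>A \<times> B. (Si (fst p2) (fst p) * R (snd p2) (snd p) - idmat (fst p2) (fst p) * idmat (snd p2) (snd p)) * t p)
           * N (fst p2) (snd p2)) = 0"
proof -
  have "(\<Sum>p2\<in>A \<times> B. (\<Sum>p\<in>A \<times> B. (Si (fst p2) (fst p) * R (snd p2) (snd p) - idmat (fst p2) (fst p) * idmat (snd p2) (snd p)) * t p)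
           * N (fst p2) (snd p2))
     = (\<Sum>p2\<in>A \<times> B. \<Sum>p\<in>A \<times> B. t p * ((Si (fst p2) (fst p) * R (snd p2) (snd p) - idmat (fst p2) (fst p) * idmat (snd p2) (snd p))
           * N (fst p2) (snd p2)))"
    by (simp add: sum_distrib_right sum_distrib_left mult.commute mult.left_commute)
  also have "\<dots> = (\<Sum>p\<in>A \<times> B. \<Sum>p2\<in>A \<times> B. t p * ((Si (fst p2) (fst p) * R (snd p2) (snd p) - idmat (fst p2) (fst p) * idmat (snd p2) (snd p))
           * N (fst p2) (snd p2)))"
    by (rule sum.swap)
  also have "\<dots> = (\<Sum>p\<in>A \<times> B. t p * ((\<Sum>p2\<in>A \<times> B. Si (fst p2) (fst p) * R (snd p2) (snd p) * N (fst p2) (snd p2))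
        - (\<Sum>p2\<in>A \<times> B. idmat (fst p2) (fst p) * (idmat (snd p2) (snd p) * N (fst p2) (snd p2)))))"
    by (simp add: sum_distrib_left sum_subtractf algebra_simps)
  also have "\<dots> = (\<Sum>p\<in>A \<times> B. t p * 0)"
  proof (rule sum.cong[OF refl])
    fix p assume p: "p \<in> A \<times> B"
    have "(\<Sum>p2\<in>A \<times> B. Si (fst p2) (fst p) * R (snd p2) (snd p) * N (fst p2) (snd p2)) = N (fst p) (snd p)"
      using fx p by (simp add: sum_prod_nest mem_Times_iff)
    moreover have "(\<Sum>p2\<in>A \<times> B. idmat (fst p2) (fst p) * (idmat (snd p2) (snd p) * N (fst p2) (snd p2))) = N (fst p) (snd p)"
      using p fA fB by (simp add: sum_prod_nest mem_Times_iff idmat_sum_left2 sum_distrib_left[symmetric])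
    ultimately show "t p * ((\<Sum>p2\<in>A \<times> B. Si (fst p2) (fst p) * R (snd p2) (snd p) * N (fst p2) (snd p2))
        - (\<Sum>p2\<in>A \<times> B. idmat (fst p2) (fst p) * (idmat (snd p2) (snd p) * N (fst p2) (snd p2)))) = t p * 0"
      by simp
  qed
  finally show ?thesis by simp
qed



definition gens :: "nat \<Rightarrow> nat \<Rightarrow> (nat list \<Rightarrow> nat list \<Rightarrow> 'k::field) \<Rightarrow> (nat list \<Rightarrow> nat list \<Rightarrow> 'k) \<Rightarrow> nat \<Rightarrow> ((nat \<times> nat) list \<Rightarrow> 'k) set" where
  "gens d' d R' R n = {tmul (i+2) (tmul i x s) y | i x s y.
      i + 2 \<le> n \<and> x \<in> tens (Walph d' d) i \<and> s \<in> A_rels d' d R' R \<and> y \<in> tens (Walph d' d) (n - 2 - i)}"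

lemma A_ideal_gens: "A_ideal d' d R' R n = lspan (gens d' d R' R n)"
  unfolding A_ideal_def ideal_deg_def gens_def by simp

lemma I12:
  fixes R' :: "nat list \<Rightarrow> nat list \<Rightarrow> 'k::field"
  assumes q: "q \<noteq> 0" and h: "hecke_symmetry d' q R'"
  shows "\<And>c a'. c \<in> words {..<d'} 2 \<Longrightarrow> a' \<in> words {..<d'} 2 \<Longrightarrow>
           (\<Sum>a\<in>words {..<d'} 2. R' a c * minv {..<d'} 2 (\<lambda>a b. R' b a) a a') = idmat c a'"
    and "\<And>a'' a. a'' \<in> words {..<d'} 2 \<Longrightarrow> a \<in> words {..<d'} 2 \<Longrightarrow>
           (\<Sum>c\<in>words {..<d'} 2. minv {..<d'} 2 (\<lambda>a b. R' b a) a'' c * R' a c) = idmat a'' a"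
  using minv_hecke[OF q h] unfolding meq_def mmul_def by auto

lemma comm_of_HomH:
  fixes R R' M :: "nat list \<Rightarrow> nat list \<Rightarrow> 'k::field"
  assumes M: "M \<in> HomH d d' R R' (i+2+k)"
    and u1: "u1 \<in> words {..<d'} i" and u3: "u3 \<in> words {..<d'} k"
    and w1: "w1 \<in> words {..<d} i" and w3: "w3 \<in> words {..<d} k"
  shows "\<forall>a\<in>words {..<d'} 2. \<forall>b'\<in>words {..<d} 2.
     (\<Sum>b\<in>words {..<d} 2. M (u1 @ a @ u3) (w1 @ b @ w3) * R b b') = (\<Sum>c\<in>words {..<d'} 2. R' a c * M (u1 @ c @ u3) (w1 @ b' @ w3))"
proof (intro ballI)
  fix a b' assume a: "a \<in> words {..<d'} 2" and b': "b' \<in> words {..<d} 2"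
  have u: "u1 @ a @ u3 \<in> words {..<d'} (i+2+k)" and w: "w1 @ b' @ w3 \<in> words {..<d} (i+2+k)"
    using u1 a u3 w1 b' w3 by (auto simp: words_def)
  have "(\<Sum>v\<in>words {..<d} (i+2+k). M (u1 @ a @ u3) v * lift {..<d} (i+2+k) R i v (w1 @ b' @ w3))
      = (\<Sum>v\<in>words {..<d'} (i+2+k). lift {..<d'} (i+2+k) R' i (u1 @ a @ u3) v * M v (w1 @ b' @ w3))"
    using M u w unfolding HomH_def by auto
  moreover have "(\<Sum>v\<in>words {..<d} (i+2+k). M (u1 @ a @ u3) v * lift {..<d} (i+2+k) R i v (w1 @ b' @ w3))
      = (\<Sum>b\<in>words {..<d} 2. M (u1 @ a @ u3) (w1 @ b @ w3) * R b b')"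
    using w1 b' w3 by (intro lift_sum_right) auto
  moreover have "(\<Sum>v\<in>words {..<d'} (i+2+k). lift {..<d'} (i+2+k) R' i (u1 @ a @ u3) v * M v (w1 @ b' @ w3))
      = (\<Sum>c\<in>words {..<d'} 2. R' a c * M (u1 @ c @ u3) (w1 @ b' @ w3))"
    using u1 a u3 by (intro lift_sum_left) auto
  ultimately show "(\<Sum>b\<in>words {..<d} 2. M (u1 @ a @ u3) (w1 @ b @ w3) * R b b') = (\<Sum>c\<in>words {..<d'} 2. R' a c * M (u1 @ c @ u3) (w1 @ b' @ w3))"
    by simp
qed

lemma K1:
  fixes R R' M :: "nat list \<Rightarrow> nat list \<Rightarrow> 'k::field"
  assumes q: "q \<noteq> 0" and h: "hecke_symmetry d' q R'"
    and M: "M \<in> HomH d d' R R' n" and g: "g \<in> gens d' d R' R n"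
  shows "pairing d' d n g M = 0"
proof -
  obtain i y s z where gdef: "g = tmul (i+2) (tmul i y s) z" and i: "i + 2 \<le> n"
    and s: "s \<in> A_rels d' d R' R"
    using g unfolding gens_def by blast
  obtain t where sdef: "s = mapply (Walph d' d) 2 (\<lambda>u w. calR d' R' R u w - idmat u w) t"
    using s unfolding A_rels_def by blast
  define k where "k = n - 2 - i"
  have n: "n = i + 2 + k" using i k_def by simp
  let ?Si = "minv {..<d'} 2 (\<lambda>a b. R' b a)"
  have M': "M \<in> HomH d d' R R' (i+2+k)" using M n by simp
  have inner: "(\<Sum>p2\<in>words {..<d'} 2 \<times> words {..<d} 2. s (zip (fst p2) (snd p2)) *
          M (fst p1 @ fst p2 @ fst p3) (snd p1 @ snd p2 @ snd p3)) = 0"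
    if p1: "p1 \<in> words {..<d'} i \<times> words {..<d} i" and p3: "p3 \<in> words {..<d'} k \<times> words {..<d} k" for p1 p3
  proof -
    define N where "N = (\<lambda>a b. M (fst p1 @ a @ fst p3) (snd p1 @ b @ snd p3))"
    have comm: "\<forall>a\<in>words {..<d'} 2. \<forall>b'\<in>words {..<d} 2.
       (\<Sum>b\<in>words {..<d} 2. N a b * R b b') = (\<Sum>c\<in>words {..<d'} 2. R' a c * N c b')"
      unfolding N_def using comm_of_HomH[OF M'] p1 p3 by (simp add: mem_Times_iff)
    have fx: "\<forall>a'\<in>words {..<d'} 2. \<forall>b'\<in>words {..<d} 2.
       (\<Sum>a\<in>words {..<d'} 2. \<Sum>b\<in>words {..<d} 2. ?Si a a' * R b b' * N a b) = N a' b'"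
      using core_comm_fix[of "words {..<d'} 2" "words {..<d} 2" R' ?Si N R, OF finite_words[OF finite_lessThan] finite_words[OF finite_lessThan] I12[OF q h]] comm
      by simp
    have "(\<Sum>p2\<in>words {..<d'} 2 \<times> words {..<d} 2. s (zip (fst p2) (snd p2)) *
          M (fst p1 @ fst p2 @ fst p3) (snd p1 @ snd p2 @ snd p3))
      = (\<Sum>p2\<in>words {..<d'} 2 \<times> words {..<d} 2. (\<Sum>p\<in>words {..<d'} 2 \<times> words {..<d} 2.
          (?Si (fst p2) (fst p) * R (snd p2) (snd p) - idmat (fst p2) (fst p) * idmat (snd p2) (snd p)) * t (zip (fst p) (snd p)))
           * N (fst p2) (snd p2))"
      unfolding N_def sdef by (intro sum.cong refl, subst inner_s) (auto simp: mem_Times_iff)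
    also have "\<dots> = 0"
      by (rule inner_zero[OF finite_words[OF finite_lessThan] finite_words[OF finite_lessThan] fx])
    finally show ?thesis .
  qed
  have "pairing d' d n g M = pairing d' d (i+2+k) (tmul (i+2) (tmul i y s) z) M" using n gdef by simp
  also have "\<dots> = (\<Sum>p1\<in>words {..<d'} i \<times> words {..<d} i. \<Sum>p3\<in>words {..<d'} k \<times> words {..<d} k.
      y (zip (fst p1) (snd p1)) * z (zip (fst p3) (snd p3)) *
      (\<Sum>p2\<in>words {..<d'} 2 \<times> words {..<d} 2. s (zip (fst p2) (snd p2)) *
          M (fst p1 @ fst p2 @ fst p3) (snd p1 @ snd p2 @ snd p3)))"
    by (rule gen_pair)
  also have "\<dots> = 0" using inner by simp
  finally show ?thesis .
qed



lemma delta_tens: "v \<in> words X m \<Longrightarrow> (\<lambda>V. idmat V v) \<in> tens X m"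
  by (auto simp: tens_def idmat_def)

lemma K2:
  fixes R R' M :: "nat list \<Rightarrow> nat list \<Rightarrow> 'k::field"
  assumes q: "q \<noteq> 0" and h: "hecke_symmetry d' q R'"
    and supp: "\<forall>u w. u \<notin> words {..<d'} n \<or> w \<notin> words {..<d} n \<longrightarrow> M u w = 0"
    and ann: "\<forall>g\<in>gens d' d R' R n. pairing d' d n g M = 0"
  shows "M \<in> HomH d d' R R' n"
  unfolding HomH_def
proof (intro CollectI conjI allI impI ballI)
  fix u w assume "u \<notin> words {..<d'} n \<or> w \<notin> words {..<d} n"
  thus "M u w = 0" using supp by blast
next
  fix i u w assume i: "i + 2 \<le> n" and u: "u \<in> words {..<d'} n" and w: "w \<in> words {..<d} n"
  define k where "k = n - 2 - i"
  have n: "n = i + 2 + k" using i k_def by simp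
  let ?Si = "minv {..<d'} 2 (\<lambda>a b. R' b a)"
  let ?A2 = "words {..<d'} 2" and ?B2 = "words {..<d} 2"
  define u1 a u3 where "u1 = take i u" "a = take 2 (drop i u)" "u3 = drop (i+2) u"
  define w1 b' w3 where "w1 = take i w" "b' = take 2 (drop i w)" "w3 = drop (i+2) w"
  have ue: "u = u1 @ a @ u3" and we: "w = w1 @ b' @ w3"
  proof -
    have e: "drop (i+2) u = drop 2 (drop i u)" "drop (i+2) w = drop 2 (drop i w)" by (simp_all add: add.commute)
    show "u = u1 @ a @ u3" unfolding u1_a_u3_def e by (simp only: append_take_drop_id)
    show "w = w1 @ b' @ w3" unfolding w1_b'_w3_def e by (simp only: append_take_drop_id)
  qed
  have mem: "u1 \<in> words {..<d'} i" "a \<in> ?A2" "u3 \<in> words {..<d'} k"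
            "w1 \<in> words {..<d} i" "b' \<in> ?B2" "w3 \<in> words {..<d} k"
    using u w n unfolding u1_a_u3_def w1_b'_w3_def
    by (auto simp: words_def dest: in_set_takeD in_set_dropD)
  define N where "N = (\<lambda>a b. M (u1 @ a @ u3) (w1 @ b @ w3))"
  have fx: "\<forall>a'\<in>?A2. \<forall>b''\<in>?B2. (\<Sum>a\<in>?A2. \<Sum>b\<in>?B2. ?Si a a' * R b b'' * N a b) = N a' b''"
  proof (intro ballI)
    fix a' b'' assume a': "a' \<in> ?A2" and b'': "b'' \<in> ?B2"
    define y0 where "y0 = (\<lambda>V. idmat V (zip u1 w1) :: 'k)"
    define z0 where "z0 = (\<lambda>V. idmat V (zip u3 w3) :: 'k)"
    define t0 where "t0 = (\<lambda>V. idmat V (zip a' b'') :: 'k)"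
    define s0 where "s0 = mapply (Walph d' d) 2 (\<lambda>u w. calR d' R' R u w - idmat u w) t0"
    have "y0 \<in> tens (Walph d' d) i" unfolding y0_def Walph_def
      by (rule delta_tens, rule zip_in_words) (use mem in auto)
    moreover have "z0 \<in> tens (Walph d' d) (n - 2 - i)" unfolding z0_def Walph_def k_def[symmetric]
      by (rule delta_tens, rule zip_in_words) (use mem in auto)
    moreover have "t0 \<in> tens (Walph d' d) 2" unfolding t0_def Walph_def
      by (rule delta_tens, rule zip_in_words) (use a' b'' in auto)
    hence "s0 \<in> A_rels d' d R' R" unfolding s0_def A_rels_def by blast
    ultimately have "tmul (i+2) (tmul i y0 s0) z0 \<in> gens d' d R' R n"
      unfolding gens_def using i by blast
    hence "0 = pairing d' d (i+2+k) (tmul (i+2) (tmul i y0 s0) z0) M" using ann n by simp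
    also have "\<dots> = (\<Sum>p1\<in>words {..<d'} i \<times> words {..<d} i. \<Sum>p3\<in>words {..<d'} k \<times> words {..<d} k.
      y0 (zip (fst p1) (snd p1)) * z0 (zip (fst p3) (snd p3)) *
      (\<Sum>p2\<in>?A2 \<times> ?B2. s0 (zip (fst p2) (snd p2)) *
          M (fst p1 @ fst p2 @ fst p3) (snd p1 @ snd p2 @ snd p3)))"
      by (rule gen_pair)
    also have "\<dots> = (\<Sum>p1\<in>words {..<d'} i \<times> words {..<d} i.
       \<Sum>p3\<in>words {..<d'} k \<times> words {..<d} k. if p1 = (u1,w1) then (if p3 = (u3, w3) then
        (\<Sum>p2\<in>?A2 \<times> ?B2. s0 (zip (fst p2) (snd p2)) *
          M (fst p1 @ fst p2 @ fst p3) (snd p1 @ snd p2 @ snd p3)) else 0) else 0)"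
    proof (intro sum.cong refl)
      fix p1 p3 assume p1: "p1 \<in> words {..<d'} i \<times> words {..<d} i" and p3: "p3 \<in> words {..<d'} k \<times> words {..<d} k"
      have "y0 (zip (fst p1) (snd p1)) = (if p1 = (u1,w1) then 1 else 0)"
        using p1 mem zip_inj_words[of "fst p1" "{..<d'}" i "snd p1" "{..<d}" u1 w1]
        unfolding y0_def idmat_def by (auto simp: mem_Times_iff)
      moreover have "z0 (zip (fst p3) (snd p3)) = (if p3 = (u3,w3) then 1 else 0)"
        using p3 mem zip_inj_words[of "fst p3" "{..<d'}" k "snd p3" "{..<d}" u3 w3]
        unfolding z0_def idmat_def by (auto simp: mem_Times_iff)
      ultimately show "y0 (zip (fst p1) (snd p1)) * z0 (zip (fst p3) (snd p3)) *
        (\<Sum>p2\<in>?A2 \<times> ?B2. s0 (zip (fst p2) (snd p2)) * M (fst p1 @ fst p2 @ fst p3) (snd p1 @ snd p2 @ snd p3))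
        = (if p1 = (u1,w1) then (if p3 = (u3, w3) then
        (\<Sum>p2\<in>?A2 \<times> ?B2. s0 (zip (fst p2) (snd p2)) *
          M (fst p1 @ fst p2 @ fst p3) (snd p1 @ snd p2 @ snd p3)) else 0) else 0)"
        by simp
    qed
    also have "\<dots> = (\<Sum>p1\<in>words {..<d'} i \<times> words {..<d} i. if p1 = (u1,w1) then
       (\<Sum>p3\<in>words {..<d'} k \<times> words {..<d} k. if p3 = (u3, w3) then
        (\<Sum>p2\<in>?A2 \<times> ?B2. s0 (zip (fst p2) (snd p2)) *
          M (fst p1 @ fst p2 @ fst p3) (snd p1 @ snd p2 @ snd p3)) else 0) else 0)"
      by (rule sum.cong[OF refl]) auto
    also have "\<dots> = (\<Sum>p2\<in>?A2 \<times> ?B2. s0 (zip (fst p2) (snd p2)) * N (fst p2) (snd p2))"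
      using mem by (simp add: finite_words N_def)
    also have "\<dots> = (\<Sum>p2\<in>?A2 \<times> ?B2. (?Si (fst p2) a' * R (snd p2) b'' - idmat (fst p2) a' * idmat (snd p2) b'') * N (fst p2) (snd p2))"
    proof (intro sum.cong refl)
      fix p2 assume p2: "p2 \<in> ?A2 \<times> ?B2"
      have "s0 (zip (fst p2) (snd p2)) = (\<Sum>p\<in>?A2 \<times> ?B2.
        (?Si (fst p2) (fst p) * R (snd p2) (snd p) - idmat (fst p2) (fst p) * idmat (snd p2) (snd p)) * t0 (zip (fst p) (snd p)))"
        unfolding s0_def using p2 by (intro inner_s) (auto simp: mem_Times_iff)
      also have "\<dots> = (\<Sum>p\<in>?A2 \<times> ?B2. if p = (a', b'') then
        (?Si (fst p2) (fst p) * R (snd p2) (snd p) - idmat (fst p2) (fst p) * idmat (snd p2) (snd p)) else 0)"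
      proof (intro sum.cong refl)
        fix p assume p: "p \<in> ?A2 \<times> ?B2"
        have "t0 (zip (fst p) (snd p)) = (if p = (a', b'') then 1 else 0)"
          using p a' b'' zip_inj_words[of "fst p" "{..<d'}" 2 "snd p" "{..<d}" a' b'']
          unfolding t0_def idmat_def by (auto simp: mem_Times_iff)
        thus "(?Si (fst p2) (fst p) * R (snd p2) (snd p) - idmat (fst p2) (fst p) * idmat (snd p2) (snd p)) * t0 (zip (fst p) (snd p))
          = (if p = (a', b'') then (?Si (fst p2) (fst p) * R (snd p2) (snd p) - idmat (fst p2) (fst p) * idmat (snd p2) (snd p)) else 0)"
          by simp
      qed
      also have "\<dots> = ?Si (fst p2) a' * R (snd p2) b'' - idmat (fst p2) a' * idmat (snd p2) b''"
        using a' b'' by (simp add: finite_words)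
      finally show "s0 (zip (fst p2) (snd p2)) * N (fst p2) (snd p2) =
         (?Si (fst p2) a' * R (snd p2) b'' - idmat (fst p2) a' * idmat (snd p2) b'') * N (fst p2) (snd p2)" by simp
    qed
    also have "\<dots> = (\<Sum>a\<in>?A2. \<Sum>b\<in>?B2. ?Si a a' * R b b'' * N a b) - (\<Sum>a\<in>?A2. idmat a a' * (\<Sum>b\<in>?B2. idmat b b'' * N a b))"
      by (simp add: sum_prod_nest algebra_simps sum_subtractf sum_distrib_left sum.distrib)
    also have "\<dots> = (\<Sum>a\<in>?A2. \<Sum>b\<in>?B2. ?Si a a' * R b b'' * N a b) - N a' b''"
      using a' b'' by (simp add: idmat_sum_left2 finite_words)
    finally show "(\<Sum>a\<in>?A2. \<Sum>b\<in>?B2. ?Si a a' * R b b'' * N a b) = N a' b''" by simp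
  qed
  have comm: "\<forall>a\<in>?A2. \<forall>b'\<in>?B2. (\<Sum>b\<in>?B2. N a b * R b b') = (\<Sum>c\<in>?A2. R' a c * N c b')"
    using core_comm_fix[of ?A2 ?B2 R' ?Si N R, OF finite_words[OF finite_lessThan] finite_words[OF finite_lessThan] I12[OF q h]] fx
    by simp
  have "(\<Sum>v\<in>words {..<d} (i+2+k). M u v * lift {..<d} n R i v w)
      = (\<Sum>b\<in>?B2. M (u1 @ a @ u3) (w1 @ b @ w3) * R b b')"
    unfolding ue we using mem by (intro lift_sum_right) auto
  also have "\<dots> = (\<Sum>c\<in>?A2. R' a c * M (u1 @ c @ u3) (w1 @ b' @ w3))"
    using comm mem unfolding N_def by simp
  also have "\<dots> = (\<Sum>v\<in>words {..<d'} (i+2+k). lift {..<d'} n R' i u v * M v w)"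
    unfolding ue we using mem by (intro lift_sum_left[symmetric]) auto
  finally show "(\<Sum>v\<in>words {..<d} n. M u v * lift {..<d} n R i v w) = (\<Sum>v\<in>words {..<d'} n. lift {..<d'} n R' i u v * M v w)"
    using n by simp
qed



definition sc1 :: "'k::field \<Rightarrow> ('a \<Rightarrow> 'k) \<Rightarrow> ('a \<Rightarrow> 'k)" where "sc1 c f = (\<lambda>w. c * f w)"
definition sc2 :: "'k::field \<Rightarrow> ('a \<Rightarrow> 'b \<Rightarrow> 'k) \<Rightarrow> ('a \<Rightarrow> 'b \<Rightarrow> 'k)" where "sc2 c M = (\<lambda>u w. c * M u w)"

lemma vs1: "vector_space (sc1 :: 'k::field \<Rightarrow> ('a \<Rightarrow> 'k) \<Rightarrow> _)"
  by unfold_locales (auto simp: sc1_def fun_eq_iff algebra_simps)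

lemma vs2: "vector_space (sc2 :: 'k::field \<Rightarrow> ('a \<Rightarrow> 'b \<Rightarrow> 'k) \<Rightarrow> _)"
  by unfold_locales (auto simp: sc2_def fun_eq_iff algebra_simps)

lemma module_sc1: "module (sc1 :: 'k::field \<Rightarrow> ('a \<Rightarrow> 'k) \<Rightarrow> _)"
  using vs1 module_iff_vector_space by blast

lemma span1: "module.span sc1 S = lspan S"
  unfolding module.span_explicit[OF module_sc1] lspan_def
proof (intro subset_antisym subsetI)
  fix x assume "x \<in> {\<Sum>a\<in>t. sc1 (r a) a |t r. finite t \<and> t \<subseteq> S}"
  then obtain t r where "finite t" "t \<subseteq> S" "x = (\<Sum>a\<in>t. sc1 (r a) a)" by blast
  thus "x \<in> {z. \<exists>F c. finite F \<and> F \<subseteq> S \<and> z = (\<lambda>w. \<Sum>f\<in>F. c f * f w)}"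
    by (auto simp: fun_eq_iff sum_fun_apply sc1_def)
next
  fix x assume "x \<in> {z. \<exists>F c. finite F \<and> F \<subseteq> S \<and> z = (\<lambda>w. \<Sum>f\<in>F. c f * f w)}"
  then obtain F c where "finite F" "F \<subseteq> S" "x = (\<lambda>w. \<Sum>f\<in>F. c f * f w)" by blast
  moreover have "(\<lambda>w. \<Sum>f\<in>F. c f * f w) = (\<Sum>a\<in>F. sc1 (c a) a)"
    by (auto simp: fun_eq_iff sum_fun_apply sc1_def)
  ultimately show "x \<in> {\<Sum>a\<in>t. sc1 (r a) a |t r. finite t \<and> t \<subseteq> S}" by blast
qed

lemma pairing_lin: "pairing d' d n (\<lambda>w. a * x w + b * y w) M = a * pairing d' d n x M + b * pairing d' d n y M"
  unfolding pairing_def by (simp add: sum_distrib_left sum.distrib algebra_simps)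

lemma pairing_linM: "pairing d' d n x (\<lambda>u w. a * M u w + b * N u w) = a * pairing d' d n x M + b * pairing d' d n x N"
  unfolding pairing_def by (simp add: sum_distrib_left sum.distrib algebra_simps)

lemma pairing_lspan: "finite F \<Longrightarrow> pairing d' d n (\<lambda>w. \<Sum>f\<in>F. c f * f w) M = (\<Sum>f\<in>F. c f * pairing d' d n f M)"
proof (induct F rule: finite_induct)
  case empty
  then show ?case by (simp add: pairing_def)
next
  case (insert g F)
  have "(\<lambda>w. \<Sum>f\<in>insert g F. c f * f w) = (\<lambda>w. c g * g w + 1 * (\<Sum>f\<in>F. c f * f w))"
    using insert by simp
  thus ?case using insert pairing_lin[of d' d n "c g" g 1 "\<lambda>w. \<Sum>f\<in>F. c f * f w" M] by simp
qed

lemma gens_tens: "g \<in> gens d' d R' R n \<Longrightarrow> g \<in> tens (Walph d' d) n"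
proof -
  assume "g \<in> gens d' d R' R n"
  then obtain i y s z where g: "g = tmul (i+2) (tmul i y s) z" and i: "i + 2 \<le> n"
    and y: "y \<in> tens (Walph d' d) i" and s: "s \<in> A_rels d' d R' R" and z: "z \<in> tens (Walph d' d) (n - 2 - i)"
    unfolding gens_def by blast
  have s2: "s \<in> tens (Walph d' d) 2" using s unfolding A_rels_def tens_def mapply_def by auto
  show ?thesis unfolding tens_def
  proof (intro CollectI allI impI)
    fix w assume w: "w \<notin> words (Walph d' d) n"
    show "g w = 0"
    proof (rule ccontr)
      assume "g w \<noteq> 0"
      hence nz: "y (take i w) \<noteq> 0" "s (drop i (take (i+2) w)) \<noteq> 0" "z (drop (i+2) w) \<noteq> 0"
        unfolding g tmul_def by (auto simp: min_def)
      have m1: "take i w \<in> words (Walph d' d) i" using nz(1) y unfolding tens_def by blast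
      have m2: "drop i (take (i+2) w) \<in> words (Walph d' d) 2" using nz(2) s2 unfolding tens_def by blast
      have m3: "drop (i+2) w \<in> words (Walph d' d) (n-2-i)" using nz(3) z unfolding tens_def by blast
      have e: "w = take i w @ drop i (take (i+2) w) @ drop (i+2) w"
      proof -
        have "take i w @ drop i (take (i+2) w) = take (i+2) w"
          by (metis append_take_drop_id le_add1 take_take min_def)
        thus ?thesis by (metis append.assoc append_take_drop_id)
      qed
      have "drop i (take (i+2) w) @ drop (i+2) w \<in> words (Walph d' d) (2 + (n-2-i))"
        by (rule words_append_in[OF m2 m3])
      hence "take i w @ drop i (take (i+2) w) @ drop (i+2) w \<in> words (Walph d' d) (i + (2 + (n-2-i)))"
        by (rule words_append_in[OF m1])
      hence wm: "w \<in> words (Walph d' d) (i + (2 + (n-2-i)))" using e by simp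
      have eqn: "i + (2 + (n-2-i)) = n" using i by arith
      from wm[unfolded eqn] w show False by blast
    qed
  qed
qed



lemma module_sc2: "module (sc2 :: 'k::field \<Rightarrow> ('a \<Rightarrow> 'b \<Rightarrow> 'k) \<Rightarrow> _)"
  using vs2 module_iff_vector_space by blast

lemma HomH_subspace: "module.subspace sc2 (HomH d d' R R' n)"
  unfolding module.subspace_def[OF module_sc2]
proof (intro conjI ballI allI)
  show "0 \<in> HomH d d' R R' n" unfolding HomH_def by simp
next
  fix M N assume M: "M \<in> HomH d d' R R' n" and N: "N \<in> HomH d d' R R' n"
  show "M + N \<in> HomH d d' R R' n"
    using M N unfolding HomH_def by (simp add: distrib_right distrib_left sum.distrib)
next
  fix c M assume M: "M \<in> HomH d d' R R' n"
  show "sc2 c M \<in> HomH d d' R R' n"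
    using M unfolding HomH_def sc2_def by (simp add: mult.assoc mult.left_commute sum_distrib_left[symmetric])
qed

lemma rep_functional:
  fixes g :: "((nat \<times> nat) list \<Rightarrow> 'k::field) \<Rightarrow> 'k"
  assumes g: "Vector_Spaces.linear sc1 (*) g" and y: "y \<in> tens (Walph d' d) n"
  shows "pairing d' d n y (\<lambda>u w. if u \<in> words {..<d'} n \<and> w \<in> words {..<d} n then g (\<lambda>V. idmat V (zip u w)) else 0) = g y"
proof -
  have mh: "module_hom sc1 (*) g" using g module_hom_iff_linear by blast
  let ?W = "words (Walph d' d) n"
  have fW: "finite ?W" by (simp add: finite_words Walph_def)
  have ye: "y = (\<Sum>U\<in>?W. sc1 (y U) (\<lambda>V. idmat V U))"
  proof (rule ext)
    fix w
    show "y w = (\<Sum>U\<in>?W. sc1 (y U) (\<lambda>V. idmat V U)) w"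
    proof (cases "w \<in> ?W")
      case True
      thus ?thesis using fW by (simp add: sum_fun_apply sc1_def idmat_sym[of w] idmat_sum_right)
    next
      case False
      hence "y w = 0" using y unfolding tens_def by blast
      moreover have "(\<Sum>U\<in>?W. sc1 (y U) (\<lambda>V. idmat V U)) w = 0"
        unfolding sum_fun_apply sc1_def using False by (intro sum.neutral) (auto simp: idmat_def)
      ultimately show ?thesis by simp
    qed
  qed
  have "g y = (\<Sum>U\<in>?W. y U * g (\<lambda>V. idmat V U))"
    by (subst ye) (simp add: module_hom.sum[OF mh] module_hom.scale[OF mh])
  also have "\<dots> = (\<Sum>u\<in>words {..<d'} n. \<Sum>w\<in>words {..<d} n. y (zip u w) * g (\<lambda>V. idmat V (zip u w)))"
    unfolding Walph_def by (rule sum_words_zip)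
  also have "\<dots> = pairing d' d n y (\<lambda>u w. if u \<in> words {..<d'} n \<and> w \<in> words {..<d} n then g (\<lambda>V. idmat V (zip u w)) else 0)"
    unfolding pairing_def by (intro sum.cong refl) simp
  finally show ?thesis by simp
qed



theorem lemma6p3:
  fixes q :: "'k::field" and d d' n :: nat
    and R R' :: "nat list \<Rightarrow> nat list \<Rightarrow> 'k"
  assumes "q \<noteq> 0"
    and "hecke_symmetry d q R"
    and "hecke_symmetry d' q R'"
  shows "\<exists>\<phi> :: ((nat \<times> nat) list \<Rightarrow> 'k) \<Rightarrow> (nat list \<Rightarrow> nat list \<Rightarrow> 'k) \<Rightarrow> 'k.
     (\<forall>x\<in>tens (Walph d' d) n. \<forall>y\<in>tens (Walph d' d) n. \<forall>a b. \<forall>M\<in>HomH d d' R R' n.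
        \<phi> (\<lambda>w. a * x w + b * y w) M = a * \<phi> x M + b * \<phi> y M) \<and>
     (\<forall>x\<in>tens (Walph d' d) n. lin_functional (HomH d d' R R' n) (\<phi> x)) \<and>
     (\<forall>f. lin_functional (HomH d d' R R' n) f \<longrightarrow>
        (\<exists>x\<in>tens (Walph d' d) n. \<forall>M\<in>HomH d d' R R' n. \<phi> x M = f M)) \<and>
     (\<forall>x\<in>tens (Walph d' d) n.
        (\<forall>M\<in>HomH d d' R R' n. \<phi> x M = 0) \<longleftrightarrow> x \<in> A_ideal d' d R' R n)"
proof (intro exI[of _ "pairing d' d n"] conjI)
  note q = assms(1) and h' = assms(3)
  let ?H = "HomH d d' R R' n"
  show "\<forall>x\<in>tens (Walph d' d) n. \<forall>y\<in>tens (Walph d' d) n. \<forall>a b. \<forall>M\<in>?H.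
        pairing d' d n (\<lambda>w. a * x w + b * y w) M = a * pairing d' d n x M + b * pairing d' d n y M"
    by (simp add: pairing_lin)
  show "\<forall>x\<in>tens (Walph d' d) n. lin_functional ?H (pairing d' d n x)"
    unfolding lin_functional_def by (simp add: pairing_linM)
  show "\<forall>f. lin_functional ?H f \<longrightarrow> (\<exists>x\<in>tens (Walph d' d) n. \<forall>M\<in>?H. pairing d' d n x M = f M)"
  proof (intro allI impI)
    fix f assume lf: "lin_functional ?H f"
    have add: "f (M + N) = f M + f N" if "M \<in> ?H" "N \<in> ?H" for M N
    proof -
      have "(\<lambda>u w. 1 * M u w + 1 * N u w) = M + N" by (simp add: fun_eq_iff)
      moreover have "f (\<lambda>u w. 1 * M u w + 1 * N u w) = 1 * f M + 1 * f N"
        using lf that unfolding lin_functional_def by blast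
      ultimately show ?thesis by simp
    qed
    have sc: "f (sc2 c M) = c * f M" if "M \<in> ?H" for M c
    proof -
      have "(\<lambda>u w. c * M u w + 0 * M u w) = sc2 c M" by (simp add: fun_eq_iff sc2_def)
      moreover have "f (\<lambda>u w. c * M u w + 0 * M u w) = c * f M + 0 * f M"
        using lf that unfolding lin_functional_def by blast
      ultimately show ?thesis by simp
    qed
    obtain F where F: "Vector_Spaces.linear sc2 (*) F" "\<forall>M\<in>?H. F M = f M"
      using vector_space.ext_functional[OF vs2 HomH_subspace, where f=f] add sc by blast
    have mh: "module_hom sc2 (*) F" using F(1) module_hom_iff_linear by blast
    define E where "E = (\<lambda>(u::nat list) (w::nat list). \<lambda>(u'::nat list) (w'::nat list). if u' = u \<and> w' = w then 1 else (0::'k))"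
    define x where "x = (\<lambda>U. if U \<in> words (Walph d' d) n then F (E (map fst U) (map snd U)) else 0)"
    have xt: "x \<in> tens (Walph d' d) n" unfolding tens_def x_def by simp
    moreover have "\<forall>M\<in>?H. pairing d' d n x M = f M"
    proof
      fix M assume M: "M \<in> ?H"
      have supp: "\<And>u w. u \<notin> words {..<d'} n \<or> w \<notin> words {..<d} n \<Longrightarrow> M u w = 0"
        using M unfolding HomH_def by blast
      have Me: "M = (\<Sum>u\<in>words {..<d'} n. \<Sum>w\<in>words {..<d} n. sc2 (M u w) (E u w))"
      proof (rule ext, rule ext)
        fix u' w'
        have "(\<Sum>u\<in>words {..<d'} n. \<Sum>w\<in>words {..<d} n. sc2 (M u w) (E u w)) u' w'
           = (\<Sum>u\<in>words {..<d'} n. \<Sum>w\<in>words {..<d} n. if u = u' then (if w = w' then M u w else 0) else 0)"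
          by (simp add: sum_fun_apply sc2_def E_def, intro sum.cong refl) auto
        also have "\<dots> = (\<Sum>u\<in>words {..<d'} n. if u = u' then (\<Sum>w\<in>words {..<d} n. if w = w' then M u w else 0) else 0)"
          by (intro sum.cong refl) auto
        also have "\<dots> = M u' w'"
          using supp[of u' w'] by (cases "u' \<in> words {..<d'} n"; cases "w' \<in> words {..<d} n") (simp_all add: finite_words)
        finally show "M u' w' = (\<Sum>u\<in>words {..<d'} n. \<Sum>w\<in>words {..<d} n. sc2 (M u w) (E u w)) u' w'" by simp
      qed
      have "pairing d' d n x M = (\<Sum>u\<in>words {..<d'} n. \<Sum>w\<in>words {..<d} n. F (E u w) * M u w)"
        unfolding pairing_def
      proof (intro sum.cong refl)
        fix u w assume u: "u \<in> words {..<d'} n" and w: "w \<in> words {..<d} n"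
        have "zip u w \<in> words (Walph d' d) n" using u w by (simp add: Walph_def zip_in_words)
        moreover have "length u = length w" using u w by (simp add: words_def)
        ultimately show "x (zip u w) * M u w = F (E u w) * M u w" by (simp add: x_def)
      qed
      also have "\<dots> = F (\<Sum>u\<in>words {..<d'} n. \<Sum>w\<in>words {..<d} n. sc2 (M u w) (E u w))"
        by (simp add: module_hom.sum[OF mh] module_hom.scale[OF mh] mult.commute)
      also have "\<dots> = F M" using Me by simp
      also have "\<dots> = f M" using F(2) M by blast
      finally show "pairing d' d n x M = f M" .
    qed
    ultimately show "\<exists>x\<in>tens (Walph d' d) n. \<forall>M\<in>?H. pairing d' d n x M = f M" by blast
  qed
  show "\<forall>x\<in>tens (Walph d' d) n. (\<forall>M\<in>?H. pairing d' d n x M = 0) \<longleftrightarrow> x \<in> A_ideal d' d R' R n"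
  proof (intro ballI iffI)
    fix x assume xt: "x \<in> tens (Walph d' d) n" and ann: "\<forall>M\<in>?H. pairing d' d n x M = 0"
    show "x \<in> A_ideal d' d R' R n"
    proof (rule ccontr)
      assume "x \<notin> A_ideal d' d R' R n"
      hence "x \<notin> module.span sc1 (gens d' d R' R n)" by (simp add: span1 A_ideal_gens)
      then obtain g where g: "Vector_Spaces.linear sc1 (*) g" "\<forall>v\<in>gens d' d R' R n. g v = 0" "g x = 1"
        using vector_space.sep_functional[OF vs1] by blast
      define Mg where "Mg = (\<lambda>u w. if u \<in> words {..<d'} n \<and> w \<in> words {..<d} n then g (\<lambda>V. idmat V (zip u w)) else 0)"
      have "Mg \<in> ?H"
      proof (rule K2[OF q h'])
        show "\<forall>u w. u \<notin> words {..<d'} n \<or> w \<notin> words {..<d} n \<longrightarrow> Mg u w = 0"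
          unfolding Mg_def by auto
        show "\<forall>g'\<in>gens d' d R' R n. pairing d' d n g' Mg = 0"
          using g(2) rep_functional[OF g(1) gens_tens] unfolding Mg_def by simp
      qed
      hence "pairing d' d n x Mg = 0" using ann by blast
      moreover have "pairing d' d n x Mg = 1"
        using rep_functional[OF g(1) xt] g(3) unfolding Mg_def by simp
      ultimately show False by simp
    qed
  next
    fix x M assume "x \<in> tens (Walph d' d) n" "x \<in> A_ideal d' d R' R n" and M: "M \<in> ?H"
    then obtain F c where F: "finite F" "F \<subseteq> gens d' d R' R n" "x = (\<lambda>w. \<Sum>f\<in>F. c f * f w)"
      unfolding A_ideal_gens lspan_def by blast
    show "pairing d' d n x M = 0"
    proof -
      have "pairing d' d n x M = (\<Sum>f\<in>F. c f * pairing d' d n f M)"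
        using F by (simp add: pairing_lspan)
      also have "\<dots> = 0" using F(2) K1[OF q h' M] by (intro sum.neutral) auto
      finally show "pairing d' d n x M = 0" .
    qed
  qed
qed

end
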